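(* Consider the following adversarial linear contextual bandit game with off-policy feedback. There is a context space $\mathcal{X}$, a finite action set $\mathcal{A}$ of size $K$, and a known feature map $\varphi:\mathcal{X}\times\mathcal{A}\to\mathbb{R}^d$. In each round $t=1,\dots,n$: the adversary chooses $\theta_t\in\mathbb{R}^d$ depending only on the past (not on $X_t$ or $A_t$), such that the rewards $r_t(x,a)=\langle\theta_t,\varphi(x,a)\rangle$ lie in $[0,1]$ for all $(x,a)$; a context $X_t$ is drawn i.i.d. from a fixed distribution on $\mathcal{X}$ and revealed to the learner; the learner picks $A_t\in\mathcal{A}$; an action $A^B_t\sim\pi_B(\cdot\mid X_t)$ is drawn from a fixed behavior policy $\pi_B:\mathcal{X}\to\Delta_{\mathcal{A}}$; the learner observes $R^B_t=r_t(X_t,A^B_t)$ and $\varphi(X_t,A^B_t)$ (but not its own reward). For a policy $\pi:\mathcal{X}\to\Delta_{\mathcal{A}}$ let $\overline V(\pi)=\mathbb{E}\big[\sum_a\pi(a\mid X)\varphi(X,a)\varphi(X,a)^\top\big]$ with $X$ drawn from the context distribution. Assume $\overline V(\pi_B)$ is known to the learner and invertible. The learner runs LinProd with learning rate $\eta>0$: it sets $\hat\theta_t=\overline V(\pi_B)^{-1}\varphi(X_t,A^B_t)R^B_t$, and in round $t$ draws $A_t$ from $$\pi_t(a\mid X_t)=\frac{w_t(X_t,a)}{\sum_{a'}w_t(X_t,a')},\qquad w_t(x,a)=\prod_{k=1}^{t-1}\big(1+\eta\langle\hat\theta_k,\varphi(x,a)\rangle\big).$$ Suppose $\lambda_{\min}(\overline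 V(\pi_B))\ge 2\eta\sup_{x,a}\|\varphi(x,a)\|_2^2$. Then for any comparator policy $\pi^*:\mathcal{X}\to\Delta_{\mathcal{A}}$, the regret $\mathcal{R}(\pi^* )=\sum_{t=1}^n\sum_a(\pi^*(a\mid X_t)-\pi_t(a\mid X_t))r_t(X_t,a)$ satisfies $$\mathbb{E}[\mathcal{R}(\pi^* )]\le\frac{\log K}{\eta}+\eta\, n\, C_\varphi(\pi^*;\pi_B),\qquad C_\varphi(\pi^*;\pi_B)=\mathrm{Tr}\big[\overline V(\pi_B)^{-1}\overline V(\pi^* )\big].$$ In particular, if $n$ is large enough that the condition on $\eta$ holds, then setting $\eta=\sqrt{\log K/n}$ gives $\mathbb{E}[\mathcal{R}(\pi^* )]\le\sqrt{n\log K}\,(1+C_\varphi(\pi^*;\pi_B))$, and setting $\eta=\sqrt{\log K/(C_\varphi(\pi^*;\pi_B)n)}$ gives $\mathbb{E}[\mathcal{R}(\pi^* )]\le 2\sqrt{C_\varphi(\pi^*;\pi_B)\,n\log K}$.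
   Context: $\Delta_{\mathcal{A}}$ is the set of probability distributions on $\mathcal{A}$; $\lambda_{\min}$ denotes the smallest eigenvalue and $\mathrm{Tr}$ the trace. $\pi_t(\cdot\mid x)$ is the learner's policy in round $t$, determined by past observations. The expectation is over all randomness of contexts, actions and adversary. *)

theory Defs
  imports "HOL-Probability.Probability"
begin

definition outer :: "real^'d \<Rightarrow> real^'d^'d" where
  "outer v = (\<chi> i j. v$i * v$j)"

definition is_policy :: "('x \<Rightarrow> 'a::finite \<Rightarrow> real) \<Rightarrow> bool" where
  "is_policy \<pi> \<longleftrightarrow> (\<forall>x a. 0 \<le> \<pi> x a) \<and> (\<forall>x. (\<Sum>a\<in>UNIV. \<pi> x a) = 1)"

definition Vbar :: "'x measure \<Rightarrow> ('x \<Rightarrow> 'a::finite \<Rightarrow> real^'d) \<Rightarrow> ('x \<Rightarrow> 'a \<Rightarrow> real) \<Rightarrow> real^'d^'d" where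
  "Vbar D \<phi> \<pi> = (\<integral>x. (\<Sum>a\<in>UNIV. \<pi> x a *\<^sub>R outer (\<phi> x a)) \<partial>D)"

text \<open>Smallest eigenvalue (for the symmetric matrices considered, all eigenvalues are real).\<close>
definition lambda_min :: "real^'d^'d \<Rightarrow> real" where
  "lambda_min A = Inf {l. \<exists>v. v \<noteq> 0 \<and> A *v v = l *\<^sub>R v}"

definition C_phi :: "'x measure \<Rightarrow> ('x \<Rightarrow> 'a::finite \<Rightarrow> real^'d) \<Rightarrow> ('x \<Rightarrow> 'a \<Rightarrow> real) \<Rightarrow> ('x \<Rightarrow> 'a \<Rightarrow> real) \<Rightarrow> real" where
  "C_phi D \<phi> \<pi>s \<pi>B = trace (matrix_inv (Vbar D \<phi> \<pi>B) ** Vbar D \<phi> \<pi>s)"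

text \<open>A history is a function h : nat => context x learner action x behaviour action;
  entry h s = (X_s, A_s, A^B_s) for the rounds s already played (rounds indexed from 0).
  The (deterministic part of the) adversary is adv : nat => history => R^d, where adv t
  is applied to the history of rounds < t only.\<close>

definition theta_hat :: "'x measure \<Rightarrow> ('x \<Rightarrow> 'a::finite \<Rightarrow> real^'d) \<Rightarrow> ('x \<Rightarrow> 'a \<Rightarrow> real)
    \<Rightarrow> (nat \<Rightarrow> (nat \<Rightarrow> 'x \<times> 'a \<times> 'a) \<Rightarrow> real^'d) \<Rightarrow> (nat \<Rightarrow> 'x \<times> 'a \<times> 'a) \<Rightarrow> nat \<Rightarrow> real^'d" where
  "theta_hat D \<phi> \<pi>B adv h k =
     (case h k of (x, a, b) \<Rightarrow>
        matrix_inv (Vbar D \<phi> \<pi>B) *v ((adv k (restrict h {..<k}) \<bullet> \<phi> x b) *\<^sub>R \<phi> x b))"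

definition linprod_weight :: "'x measure \<Rightarrow> ('x \<Rightarrow> 'a::finite \<Rightarrow> real^'d) \<Rightarrow> ('x \<Rightarrow> 'a \<Rightarrow> real)
    \<Rightarrow> (nat \<Rightarrow> (nat \<Rightarrow> 'x \<times> 'a \<times> 'a) \<Rightarrow> real^'d) \<Rightarrow> real \<Rightarrow> (nat \<Rightarrow> 'x \<times> 'a \<times> 'a) \<Rightarrow> nat \<Rightarrow> 'x \<Rightarrow> 'a \<Rightarrow> real" where
  "linprod_weight D \<phi> \<pi>B adv \<eta> h t x a =
     (\<Prod>k<t. 1 + \<eta> * (theta_hat D \<phi> \<pi>B adv h k \<bullet> \<phi> x a))"

definition linprod_policy :: "'x measure \<Rightarrow> ('x \<Rightarrow> 'a::finite \<Rightarrow> real^'d) \<Rightarrow> ('x \<Rightarrow> 'a \<Rightarrow> real)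
    \<Rightarrow> (nat \<Rightarrow> (nat \<Rightarrow> 'x \<times> 'a \<times> 'a) \<Rightarrow> real^'d) \<Rightarrow> real \<Rightarrow> (nat \<Rightarrow> 'x \<times> 'a \<times> 'a) \<Rightarrow> nat \<Rightarrow> 'x \<Rightarrow> 'a \<Rightarrow> real" where
  "linprod_policy D \<phi> \<pi>B adv \<eta> h t x a =
     linprod_weight D \<phi> \<pi>B adv \<eta> h t x a / (\<Sum>a'\<in>UNIV. linprod_weight D \<phi> \<pi>B adv \<eta> h t x a')"

text \<open>Conditional expected regret of the remaining m rounds, given that rounds < t have been
  played with history h.  In round t: theta_t = adv t h; X_t ~ D; A_t ~ pi_t(.|X_t);
  A^B_t ~ pi_B(.|X_t) (independently given X_t); instantaneous regret
  sum_a (pi*(a|X_t) - pi_t(a|X_t)) <theta_t, phi(X_t,a)>.\<close>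
fun regret_to_go :: "'x measure \<Rightarrow> ('x \<Rightarrow> 'a::finite \<Rightarrow> real^'d) \<Rightarrow> ('x \<Rightarrow> 'a \<Rightarrow> real) \<Rightarrow> ('x \<Rightarrow> 'a \<Rightarrow> real)
    \<Rightarrow> (nat \<Rightarrow> (nat \<Rightarrow> 'x \<times> 'a \<times> 'a) \<Rightarrow> real^'d) \<Rightarrow> real \<Rightarrow> nat \<Rightarrow> nat \<Rightarrow> (nat \<Rightarrow> 'x \<times> 'a \<times> 'a) \<Rightarrow> real" where
  "regret_to_go D \<phi> \<pi>B \<pi>s adv \<eta> 0 t h = 0"
| "regret_to_go D \<phi> \<pi>B \<pi>s adv \<eta> (Suc m) t h =
     (\<integral>x. (\<Sum>a\<in>UNIV. \<Sum>b\<in>UNIV.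
            linprod_policy D \<phi> \<pi>B adv \<eta> h t x a * \<pi>B x b *
            ((\<Sum>a'\<in>UNIV. (\<pi>s x a' - linprod_policy D \<phi> \<pi>B adv \<eta> h t x a') * (adv t h \<bullet> \<phi> x a'))
             + regret_to_go D \<phi> \<pi>B \<pi>s adv \<eta> m (Suc t) (h(t := (x, a, b))))) \<partial>D)"

text \<open>Expected regret E[R(pi*)] over n rounds; the adversary may be randomised through a
  seed u ~ U drawn at the start (independent of everything else).\<close>
definition expected_regret :: "'u measure \<Rightarrow> 'x measure \<Rightarrow> ('x \<Rightarrow> 'a::finite \<Rightarrow> real^'d) \<Rightarrow> ('x \<Rightarrow> 'a \<Rightarrow> real)
    \<Rightarrow> ('x \<Rightarrow> 'a \<Rightarrow> real) \<Rightarrow> ('u \<Rightarrow> nat \<Rightarrow> (nat \<Rightarrow> 'x \<times> 'a \<times> 'a) \<Rightarrow> real^'d) \<Rightarrow> real \<Rightarrow> nat \<Rightarrow> real" where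
  "expected_regret U D \<phi> \<pi>B \<pi>s adv \<eta> n =
     (\<integral>u. regret_to_go D \<phi> \<pi>B \<pi>s (adv u) \<eta> n 0 (\<lambda>_. undefined) \<partial>U)"

definition eta_condition :: "'x measure \<Rightarrow> ('x \<Rightarrow> 'a::finite \<Rightarrow> real^'d) \<Rightarrow> ('x \<Rightarrow> 'a \<Rightarrow> real) \<Rightarrow> real \<Rightarrow> bool" where
  "eta_condition D \<phi> \<pi>B \<eta> \<longleftrightarrow>
     lambda_min (Vbar D \<phi> \<pi>B) \<ge> 2 * \<eta> * (SUP p\<in>UNIV. (norm (\<phi> (fst p) (snd p)))\<^sup>2)"

end

theory Submission
  imports Defs
begin

lemma continuous_outer: "continuous_on UNIV (outer :: real^'d \<Rightarrow> _)"
  unfolding outer_def by (intro continuous_intros)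

lemma outer_alt: "outer v = (\<chi> i. v$i *\<^sub>R v)"
  by (simp add: outer_def vec_eq_iff)

lemma norm_outer: "norm (outer (v::real^'d)) = norm v * norm v"
proof -
  have e: "\<And>i. norm (outer v $ i) = \<bar>v$i\<bar> * norm v" by (simp add: outer_alt)
  have "norm (outer v) = L2_set (\<lambda>i. norm (outer v $ i)) UNIV" by (rule norm_vec_def)
  also have "\<dots> = L2_set (\<lambda>i. \<bar>v$i\<bar> * norm v) UNIV" by (simp only: e)
  also have "\<dots> = L2_set (\<lambda>i. \<bar>v$i\<bar>) UNIV * norm v"
    by (rule L2_set_left_distrib[symmetric]) simp
  also have "L2_set (\<lambda>i. \<bar>v$i\<bar>) UNIV = norm v"
    unfolding norm_vec_def by simp
  finally show ?thesis .
qed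

lemma bl_sum_scale: "bounded_linear T \<Longrightarrow> T (\<Sum>a\<in>A. c a *\<^sub>R M a) = (\<Sum>a\<in>A. c a * T (M a))" for T :: "_ \<Rightarrow> real"
  by (simp add: linear_sum[OF bounded_linear.linear] linear_scale[OF bounded_linear.linear])
lemma inner_outer: "v \<bullet> (outer u *v w) = (v \<bullet> u) * (u \<bullet> w)" for u v w :: "real^'d"
  by (simp add: outer_def matrix_vector_mult_def inner_vec_def sum_product sum_distrib_left mult_ac) (subst (2) sum.swap, simp add: mult_ac)
lemma trace_outer: "trace (A ** outer u) = u \<bullet> (A *v u)" for u :: "real^'d"
  by (simp add: outer_def trace_def matrix_matrix_mult_def matrix_vector_mult_def inner_vec_def sum_distrib_left mult_ac)
lemma bl_form: "bounded_linear (\<lambda>M::real^'d^'d. v \<bullet> (M *v w))"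
proof -
  have "linear (\<lambda>M::real^'d^'d. v \<bullet> (M *v w))"
    by (rule linearI) (simp_all add: matrix_vector_mult_add_rdistrib inner_add_right scaleR_matrix_vector_assoc[symmetric])
  then show ?thesis using linear_conv_bounded_linear by blast
qed
lemma bl_trace: "bounded_linear (\<lambda>M::real^'d^'d. trace (A ** M))"
proof -
  have "linear (\<lambda>M::real^'d^'d. trace (A ** M))"
    by (rule linearI) (simp_all add: matrix_add_ldistrib trace_add matrix_scalar_ac scalar_matrix_assoc[symmetric] trace_def sum_distrib_left sum.distrib)
  then show ?thesis using linear_conv_bounded_linear by blast
qed
context
  fixes D :: "'x measure" and \<phi> :: "'x \<Rightarrow> 'a::finite \<Rightarrow> real^'d" and \<pi> :: "'x \<Rightarrow> 'a \<Rightarrow> real"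
  assumes D: "prob_space D" and phi_meas: "\<And>a. (\<lambda>x. \<phi> x a) \<in> borel_measurable D"
    and phi_bdd: "\<exists>B. \<forall>x a. norm (\<phi> x a) \<le> B"
    and pol: "is_policy \<pi>" and pim: "\<And>a. (\<lambda>x. \<pi> x a) \<in> borel_measurable D"
begin

lemma pi_le1: "\<pi> x a \<le> 1" and pi_ge0: "0 \<le> \<pi> x a"
proof -
  show "0 \<le> \<pi> x a" using pol by (simp add: is_policy_def)
  have "\<pi> x a \<le> (\<Sum>a\<in>UNIV. \<pi> x a)"
    by (rule member_le_sum) (use pol in \<open>auto simp: is_policy_def\<close>)
  then show "\<pi> x a \<le> 1" using pol by (simp add: is_policy_def)
qed

lemma Mfun_meas: "(\<lambda>x. \<Sum>a\<in>UNIV. \<pi> x a *\<^sub>R outer (\<phi> x a)) \<in> borel_measurable D"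
  by (intro borel_measurable_sum borel_measurable_scaleR pim borel_measurable_continuous_on[OF continuous_outer] phi_meas)

lemma Mfun_int: "integrable D (\<lambda>x. \<Sum>a\<in>UNIV. \<pi> x a *\<^sub>R outer (\<phi> x a))"
proof -
  obtain B where B: "\<And>x a. norm (\<phi> x a) \<le> B" using phi_bdd by auto
  have "norm (\<Sum>a\<in>UNIV. \<pi> x a *\<^sub>R outer (\<phi> x a)) \<le> (\<Sum>a\<in>(UNIV::'a set). B * B)" for x
  proof -
    have "norm (\<Sum>a\<in>UNIV. \<pi> x a *\<^sub>R outer (\<phi> x a)) \<le> (\<Sum>a\<in>UNIV. norm (\<pi> x a *\<^sub>R outer (\<phi> x a)))"
      by (rule norm_sum)
    also have "\<dots> \<le> (\<Sum>a\<in>(UNIV::'a set). B * B)"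
    proof (rule sum_mono)
      fix a
      have "norm (\<pi> x a *\<^sub>R outer (\<phi> x a)) = \<pi> x a * (norm (\<phi> x a) * norm (\<phi> x a))"
        using pi_ge0[of x a] by (simp add: norm_outer)
      also have "\<dots> \<le> 1 * (B * B)"
        by (intro mult_mono pi_le1 mult_mono B) (auto intro: order_trans[OF norm_ge_zero B])
      finally show "norm (\<pi> x a *\<^sub>R outer (\<phi> x a)) \<le> B * B" by simp
    qed
    finally show ?thesis .
  qed
  note * = this
  show ?thesis
  proof -
    interpret prob_space D by (rule D)
    show ?thesis using * by (intro integrable_const_bound[where B="\<Sum>a\<in>(UNIV::'a set). B * B"] Mfun_meas) auto
  qed
qed

lemma Vbar_form: "v \<bullet> (Vbar D \<phi> \<pi> *v w) = (\<integral>x. (\<Sum>a\<in>UNIV. \<pi> x a * ((v \<bullet> \<phi> x a) * (\<phi> x a \<bullet> w))) \<partial>D)"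
proof -
  have "v \<bullet> (Vbar D \<phi> \<pi> *v w) = (\<integral>x. v \<bullet> ((\<Sum>a\<in>UNIV. \<pi> x a *\<^sub>R outer (\<phi> x a)) *v w) \<partial>D)"
    unfolding Vbar_def by (rule integral_bounded_linear[OF bl_form Mfun_int, symmetric])
  also have "\<dots> = (\<integral>x. (\<Sum>a\<in>UNIV. \<pi> x a * ((v \<bullet> \<phi> x a) * (\<phi> x a \<bullet> w))) \<partial>D)"
    by (simp add: bl_sum_scale[OF bl_form] inner_outer)
  finally show ?thesis .
qed

lemma Vbar_trace: "trace (A ** Vbar D \<phi> \<pi>) = (\<integral>x. (\<Sum>a\<in>UNIV. \<pi> x a * (\<phi> x a \<bullet> (A *v \<phi> x a))) \<partial>D)"
proof -
  have "trace (A ** Vbar D \<phi> \<pi>) = (\<integral>x. trace (A ** (\<Sum>a\<in>UNIV. \<pi> x a *\<^sub>R outer (\<phi> x a))) \<partial>D)"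
    unfolding Vbar_def by (rule integral_bounded_linear[OF bl_trace Mfun_int, symmetric])
  also have "\<dots> = (\<integral>x. (\<Sum>a\<in>UNIV. \<pi> x a * (\<phi> x a \<bullet> (A *v \<phi> x a))) \<partial>D)"
    by (simp add: bl_sum_scale[OF bl_trace] trace_outer)
  finally show ?thesis .
qed

end

lemma lambda_min_lemma:
  fixes V :: "real^'d^'d"
  assumes sym: "\<And>v w. v \<bullet> (V *v w) = w \<bullet> (V *v v)"
    and psd: "\<And>v. 0 \<le> v \<bullet> (V *v v)"
    and inv: "invertible V"
  shows "lambda_min V > 0 \<and> (\<forall>y. lambda_min V * (y \<bullet> y) \<le> y \<bullet> (V *v y))"
proof -
  define f where "f = (\<lambda>v::real^'d. v \<bullet> (V *v v))"
  have fsc: "f (c *\<^sub>R y) = c * c * f y" for c y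
    by (simp add: f_def matrix_vector_mult_scaleR)
  have cont: "continuous_on (sphere 0 1) f"
    unfolding f_def by (intro continuous_intros linear_continuous_on bounded_linear.linear matrix_vector_mul_bounded_linear)
  have ne: "sphere (0::real^'d) 1 \<noteq> {}" by simp
  obtain v0 where v0: "v0 \<in> sphere 0 1" and vmin: "\<And>y. y \<in> sphere 0 1 \<Longrightarrow> f v0 \<le> f y"
    using continuous_attains_inf[OF compact_sphere ne cont] by blast
  define \<mu> where "\<mu> = f v0"
  have nv0: "v0 \<bullet> v0 = 1" using v0 by (simp add: dot_square_norm)
  have A: "\<mu> * (y \<bullet> y) \<le> f y" for y
  proof (cases "y = 0")
    case True then show ?thesis by (simp add: f_def)
  next
    case False
    define y' where "y' = (1 / norm y) *\<^sub>R y"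
    have "y' \<in> sphere 0 1" using False by (simp add: y'_def)
    then have "\<mu> \<le> f y'" using vmin \<mu>_def by blast
    also have "f y' = f y / (y \<bullet> y)"
      using False by (simp add: y'_def fsc dot_square_norm power2_eq_square)
    finally show ?thesis using False by (simp add: field_simps)
  qed
  define r where "r = V *v v0 - \<mu> *\<^sub>R v0"
  have rVv: "r \<bullet> (V *v v0) - \<mu> * (r \<bullet> v0) = r \<bullet> r"
    by (simp add: r_def inner_diff_right)
  have expand: "f (v0 + t *\<^sub>R r) - \<mu> * ((v0 + t *\<^sub>R r) \<bullet> (v0 + t *\<^sub>R r))
      = 2 * t * (r \<bullet> r) + t * t * (f r - \<mu> * (r \<bullet> r))" for t
  proof -
    have s: "v0 \<bullet> (V *v r) = r \<bullet> (V *v v0)" by (rule sym)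
    have "f (v0 + t *\<^sub>R r) = f v0 + 2 * t * (r \<bullet> (V *v v0)) + t * t * f r"
      by (simp add: f_def matrix_vector_right_distrib matrix_vector_mult_scaleR
          inner_add_left inner_add_right s algebra_simps)
    moreover have "(v0 + t *\<^sub>R r) \<bullet> (v0 + t *\<^sub>R r) = 1 + 2 * t * (r \<bullet> v0) + t * t * (r \<bullet> r)"
      by (simp add: inner_add_left inner_add_right nv0 inner_commute algebra_simps)
    moreover have "v0 \<bullet> r = r \<bullet> v0" by (rule inner_commute)
    ultimately show ?thesis using rVv nv0 by (simp add: \<mu>_def[symmetric] algebra_simps)
  qed
  have r0: "r = 0"
  proof (rule ccontr)
    assume "r \<noteq> 0"
    then have rr: "r \<bullet> r > 0" by simp
    define k where "k = f r - \<mu> * (r \<bullet> r)"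
    have k0: "k \<ge> 0" using A[of r] by (simp add: k_def)
    define s where "s = (r \<bullet> r) / (k + 1)"
    have s0: "s > 0" using rr k0 by (simp add: s_def)
    have "0 \<le> 2 * (-s) * (r \<bullet> r) + (-s) * (-s) * k"
      using A[of "v0 + (-s) *\<^sub>R r"] expand[of "-s"] by (simp add: k_def)
    moreover have "s * k \<le> r \<bullet> r"
      using k0 rr by (simp add: s_def field_simps)
    then have "s * (s * k) \<le> s * (r \<bullet> r)" using s0 by (simp add: mult_left_mono)
    ultimately have "0 \<le> - s * (r \<bullet> r)" by (simp add: algebra_simps)
    moreover have "0 < s * (r \<bullet> r)" using s0 rr by (rule mult_pos_pos)
    ultimately show False by linarith
  qed
  then have eig: "V *v v0 = \<mu> *\<^sub>R v0" by (simp add: r_def)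
  have v0nz: "v0 \<noteq> 0" using nv0 by auto
  have E: "lambda_min V = \<mu>"
    unfolding lambda_min_def
  proof (rule cInf_eq_minimum)
    show "\<mu> \<in> {l. \<exists>v. v \<noteq> 0 \<and> V *v v = l *\<^sub>R v}" using eig v0nz by blast
  next
    fix l assume "l \<in> {l. \<exists>v. v \<noteq> 0 \<and> V *v v = l *\<^sub>R v}"
    then obtain v where v: "v \<noteq> 0" "V *v v = l *\<^sub>R v" by blast
    have "\<mu> * (v \<bullet> v) \<le> l * (v \<bullet> v)" using A[of v] v by (simp add: f_def)
    then show "\<mu> \<le> l" using v by simp
  qed
  have "\<mu> \<noteq> 0"
  proof
    assume "\<mu> = 0"
    then have "V *v v0 = V *v 0" using eig by simp
    then have "v0 = 0" by (rule injD[OF inj_matrix_vector_mult[OF inv]])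
    then show False using v0nz by simp
  qed
  moreover have "\<mu> \<ge> 0" using psd by (simp add: \<mu>_def f_def)
  ultimately show ?thesis using A E by (simp add: f_def)
qed



lemma ln_lower: fixes z :: real assumes "-1/2 \<le> z" "z \<le> 1/2" shows "z - z\<^sup>2 \<le> ln (1 + z)"
proof (cases "z \<ge> 0")
  case True then show ?thesis using assms ln_one_plus_pos_lower_bound[of z] by simp
next
  case False
  define g where "g = (\<lambda>x::real. ln (1 + x) - x + x\<^sup>2)"
  have "g 0 \<le> g z"
  proof (rule deriv_nonpos_imp_antimono[where a=z and b=0 and g' = "\<lambda>x. 1 / (1 + x) - 1 + 2 * x"])
    fix x assume x: "x \<in> {z..0}"
    then have "1 + x > 0" using assms by auto
    then show "(g has_real_derivative 1 / (1 + x) - 1 + 2 * x) (at x)"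
      unfolding g_def by (auto intro!: derivative_eq_intros simp: power2_eq_square field_simps)
    have "1 / (1 + x) - 1 + 2 * x = x * (1 + 2 * x) / (1 + x)"
      using \<open>1 + x > 0\<close> by (simp add: field_simps)
    also have "\<dots> \<le> 0" using x assms \<open>1 + x > 0\<close>
      by (intro divide_nonpos_pos mult_nonpos_nonneg) auto
    finally show "1 / (1 + x) - 1 + 2 * x \<le> 0" .
  next
    show "z \<le> 0" using False by simp
  qed
  then show ?thesis by (simp add: g_def)
qed

lemma mvec_meas[measurable (raw)]:
  "f \<in> borel_measurable M \<Longrightarrow> (\<lambda>x. (A::real^'n^'m) *v f x) \<in> borel_measurable M"
  by (rule borel_measurable_continuous_on[OF linear_continuous_on[OF matrix_vector_mul_bounded_linear]])

lemma dot_transpose: "(A *v z) \<bullet> y = z \<bullet> (transpose A *v y)" for A :: "real^'n^'m"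
  by (metis dot_lmul_matrix vector_transpose_matrix transpose_transpose)

locale setting =
  fixes D :: "'x measure" and \<phi> :: "'x \<Rightarrow> 'a::finite \<Rightarrow> real^'d"
    and \<pi>B \<pi>s :: "'x \<Rightarrow> 'a \<Rightarrow> real"
    and adv :: "nat \<Rightarrow> (nat \<Rightarrow> 'x \<times> 'a \<times> 'a) \<Rightarrow> real^'d" and \<eta> :: real
  assumes D: "prob_space D"
    and phi_meas[measurable]: "\<And>a. (\<lambda>x. \<phi> x a) \<in> borel_measurable D"
    and phi_bdd: "\<exists>B. \<forall>x a. norm (\<phi> x a) \<le> B"
    and piB: "is_policy \<pi>B" and piB_m[measurable]: "\<And>a. (\<lambda>x. \<pi>B x a) \<in> borel_measurable D"
    and pis: "is_policy \<pi>s" and pis_m[measurable]: "\<And>a. (\<lambda>x. \<pi>s x a) \<in> borel_measurable D"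
    and rew: "\<And>t h x a. 0 \<le> adv t h \<bullet> \<phi> x a \<and> adv t h \<bullet> \<phi> x a \<le> 1"
    and inv: "invertible (Vbar D \<phi> \<pi>B)"
    and eta: "\<eta> > 0"
    and etac: "eta_condition D \<phi> \<pi>B \<eta>"
begin

abbreviation "V \<equiv> Vbar D \<phi> \<pi>B"
abbreviation "Vi \<equiv> matrix_inv V"

lemma V_form: "v \<bullet> (V *v w) = (\<integral>x. (\<Sum>a\<in>UNIV. \<pi>B x a * ((v \<bullet> \<phi> x a) * (\<phi> x a \<bullet> w))) \<partial>D)"
  by (rule Vbar_form[OF D phi_meas phi_bdd piB piB_m])

lemma V_sym: "v \<bullet> (V *v w) = w \<bullet> (V *v v)"
  unfolding V_form by (simp add: inner_commute mult_ac)

lemma piB_ge0: "0 \<le> \<pi>B x a" and piB_le1: "\<pi>B x a \<le> 1"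
  using pi_ge0[OF D phi_meas phi_bdd piB piB_m] pi_le1[OF D phi_meas phi_bdd piB piB_m] by auto
lemma pis_ge0: "0 \<le> \<pi>s x a" and pis_le1: "\<pi>s x a \<le> 1"
  using pi_ge0[OF D phi_meas phi_bdd pis pis_m] pi_le1[OF D phi_meas phi_bdd pis pis_m] by auto
lemma piB_sum: "(\<Sum>a\<in>UNIV. \<pi>B x a) = 1" using piB by (simp add: is_policy_def)
lemma pis_sum: "(\<Sum>a\<in>UNIV. \<pi>s x a) = 1" using pis by (simp add: is_policy_def)

lemma V_psd: "0 \<le> v \<bullet> (V *v v)"
  unfolding V_form
  by (rule integral_nonneg_AE) (unfold inner_commute[of v], intro AE_I2 sum_nonneg mult_nonneg_nonneg piB_ge0 zero_le_square)

lemma VVi: "V ** Vi = mat 1" "Vi ** V = mat 1"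
  using inv unfolding invertible_def matrix_inv_def by (metis (mono_tags, lifting) someI_ex)+

lemma V_transpose: "transpose V = V"
proof -
  have "transpose V *v y = V *v y" for y
  proof -
    have "z \<bullet> (transpose V *v y) = z \<bullet> (V *v y)" for z
      by (metis dot_transpose V_sym inner_commute)
    then show ?thesis by (metis inner_commute vector_eq_ldot)
  qed
  then show ?thesis by (simp add: matrix_eq)
qed

lemma V_tVi: "V ** transpose Vi = mat 1"
  by (metis VVi(2) V_transpose matrix_transpose_mul transpose_mat)

definition "lam = lambda_min V"

lemma lam: "lam > 0" "lam * (y \<bullet> y) \<le> y \<bullet> (V *v y)"
  using lambda_min_lemma[OF V_sym V_psd inv] unfolding lam_def by auto

definition "S = (SUP p\<in>UNIV. (norm (\<phi> (fst p) (snd p)))\<^sup>2)"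

lemma phi_S: "(norm (\<phi> x a))\<^sup>2 \<le> S"
proof -
  obtain B where B: "\<And>x a. norm (\<phi> x a) \<le> B" using phi_bdd by auto
  have "bdd_above ((\<lambda>p. (norm (\<phi> (fst p) (snd p)))\<^sup>2) ` UNIV)"
    by (rule bdd_aboveI[where M="B\<^sup>2"]) (auto intro!: power_mono B)
  then have "(\<lambda>p. (norm (\<phi> (fst p) (snd p)))\<^sup>2) (x,a) \<le> S" unfolding S_def by (rule cSUP_upper[OF UNIV_I])
  then show ?thesis by simp
qed

lemma etaS: "2 * \<eta> * S \<le> lam"
  using etac unfolding eta_condition_def lam_def S_def by simp

lemma Vi_bound: "\<bar>(Vi *v z) \<bullet> y\<bar> \<le> norm z * norm y / lam"
proof -
  define q where "q = Vi *v z"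
  have Vq: "V *v q = z" by (simp add: q_def matrix_vector_mul_assoc VVi)
  have "lam * (q \<bullet> q) \<le> q \<bullet> z" using lam(2)[of q] Vq by simp
  also have "\<dots> \<le> norm q * norm z" by (rule order_trans[OF abs_ge_self Cauchy_Schwarz_ineq2])
  finally have "lam * (norm q * norm q) \<le> norm q * norm z" by (simp add: dot_square_norm power2_eq_square)
  then have nq: "lam * norm q \<le> norm z"
  proof (cases "norm q = 0")
    case True then show ?thesis by simp
  next
    case False
    then have qp: "norm q > 0" by simp
    assume "lam * (norm q * norm q) \<le> norm q * norm z"
    then have "norm q * (lam * norm q) \<le> norm q * norm z" by (simp add: mult_ac)
    then show ?thesis using qp by (simp add: mult_le_cancel_left_pos)
  qed
  have nq': "norm q \<le> norm z / lam" using nq lam(1) by (simp add: pos_le_divide_eq mult.commute)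
  have "\<bar>q \<bullet> y\<bar> \<le> norm q * norm y" by (rule Cauchy_Schwarz_ineq2)
  also have "\<dots> \<le> (norm z / lam) * norm y"
    using nq' by (rule mult_right_mono) simp
  finally show ?thesis by (simp add: q_def)
qed

lemma g_bound:
  assumes "0 \<le> c" "c \<le> 1"
  shows "\<bar>\<eta> * ((Vi *v (c *\<^sub>R \<phi> x b)) \<bullet> \<phi> x' a)\<bar> \<le> 1/2"
proof -
  have "\<bar>(Vi *v (c *\<^sub>R \<phi> x b)) \<bullet> \<phi> x' a\<bar> \<le> norm (c *\<^sub>R \<phi> x b) * norm (\<phi> x' a) / lam"
    by (rule Vi_bound)
  also have "\<dots> \<le> norm (\<phi> x b) * norm (\<phi> x' a) / lam"
    using assms lam(1) by (intro divide_right_mono mult_right_mono) (simp_all add: mult_left_le_one_le)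
  also have "norm (\<phi> x b) * norm (\<phi> x' a) \<le> S"
  proof -
    have "2 * (norm (\<phi> x b) * norm (\<phi> x' a)) \<le> (norm (\<phi> x b))\<^sup>2 + (norm (\<phi> x' a))\<^sup>2"
      using power2_diff[of "norm (\<phi> x b)" "norm (\<phi> x' a)"] zero_le_power2[of "norm (\<phi> x b) - norm (\<phi> x' a)"] by linarith
    then show ?thesis using phi_S[of x b] phi_S[of x' a] by linarith
  qed
  then have "norm (\<phi> x b) * norm (\<phi> x' a) / lam \<le> S / lam"
    using lam(1) by (simp add: divide_right_mono)
  finally have gb: "\<bar>(Vi *v (c *\<^sub>R \<phi> x b)) \<bullet> \<phi> x' a\<bar> \<le> S / lam" .
  have "\<eta> * \<bar>(Vi *v (c *\<^sub>R \<phi> x b)) \<bullet> \<phi> x' a\<bar> \<le> \<eta> * (S / lam)"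
    using gb eta by (intro mult_left_mono) auto
  also have "\<eta> * (S / lam) \<le> 1/2" using etaS lam(1) by (simp add: field_simps)
  finally show ?thesis using eta by (simp add: abs_mult)
qed

lemma th_bound: "\<bar>\<eta> * (theta_hat D \<phi> \<pi>B adv h k \<bullet> \<phi> x' a)\<bar> \<le> 1/2"
proof -
  obtain x a' b where hk: "h k = (x, a', b)" by (metis prod_cases3)
  show ?thesis unfolding theta_hat_def hk prod.case by (rule g_bound[OF conjunct1[OF rew] conjunct2[OF rew]])
qed

end

context setting begin

abbreviation "w h t x a \<equiv> linprod_weight D \<phi> \<pi>B adv \<eta> h t x a"
abbreviation "pt h t x a \<equiv> linprod_policy D \<phi> \<pi>B adv \<eta> h t x a"

definition "P h t x = (\<Sum>a\<in>UNIV. \<pi>s x a * ln (w h t x a)) - ln (\<Sum>a\<in>UNIV. w h t x a)"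
definition "Q h t = (\<integral>x. - P h t x \<partial>D)"

lemma fac_bounds: "1/2 \<le> 1 + \<eta> * (theta_hat D \<phi> \<pi>B adv h k \<bullet> \<phi> x a)"
  "1 + \<eta> * (theta_hat D \<phi> \<pi>B adv h k \<bullet> \<phi> x a) \<le> 3/2"
  using th_bound[of h k x a] by (auto simp: abs_le_iff)

lemma w_lb: "(1/2)^t \<le> w h t x a"
proof -
  have "(\<Prod>k<t. (1/2::real)) \<le> w h t x a"
    unfolding linprod_weight_def by (rule prod_mono) (use fac_bounds in auto)
  then show ?thesis by simp
qed

lemma w_ub: "w h t x a \<le> (3/2)^t"
proof -
  have "w h t x a \<le> (\<Prod>k<t. (3/2::real))"
    unfolding linprod_weight_def
  proof (rule prod_mono)
    fix k show "0 \<le> 1 + \<eta> * (theta_hat D \<phi> \<pi>B adv h k \<bullet> \<phi> x a) \<and> 1 + \<eta> * (theta_hat D \<phi> \<pi>B adv h k \<bullet> \<phi> x a) \<le> 3/2"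
      using fac_bounds[of h k x a] by linarith
  qed
  then show ?thesis by simp
qed

lemma w_pos: "0 < w h t x a"
proof -
  have "(0::real) < (1/2)^t" by simp
  then show ?thesis using w_lb[of t h x a] by linarith
qed

lemma W_pos: "0 < (\<Sum>a\<in>UNIV. w h t x a)"
  by (rule sum_pos) (auto intro: w_pos)

lemma pt_sum: "(\<Sum>a\<in>UNIV. pt h t x a) = 1"
  unfolding linprod_policy_def using W_pos[of h t x] by (simp add: sum_divide_distrib[symmetric])

lemma pt_ge0: "0 \<le> pt h t x a"
  unfolding linprod_policy_def using W_pos[of h t x] w_pos[of h t x a] by simp

lemma pt_le1: "pt h t x a \<le> 1"
proof -
  have "w h t x a \<le> (\<Sum>a\<in>UNIV. w h t x a)"
    by (rule member_le_sum) (auto intro: less_imp_le w_pos)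
  then show ?thesis unfolding linprod_policy_def using W_pos[of h t x] by simp
qed

lemma P_le0: "P h t x \<le> 0"
proof -
  have "(\<Sum>a\<in>UNIV. \<pi>s x a * ln (w h t x a)) \<le> (\<Sum>a\<in>UNIV. \<pi>s x a * ln (\<Sum>a\<in>UNIV. w h t x a))"
  proof (rule sum_mono)
    fix a
    have "w h t x a \<le> (\<Sum>a\<in>UNIV. w h t x a)"
      by (rule member_le_sum) (auto intro: less_imp_le w_pos)
    then have "ln (w h t x a) \<le> ln (\<Sum>a\<in>UNIV. w h t x a)" using w_pos[of h t x a] by simp
    then show "\<pi>s x a * ln (w h t x a) \<le> \<pi>s x a * ln (\<Sum>a\<in>UNIV. w h t x a)"
      by (rule mult_left_mono) (rule pis_ge0)
  qed
  also have "\<dots> = ln (\<Sum>a\<in>UNIV. w h t x a)" by (simp add: sum_distrib_right[symmetric] pis_sum)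
  finally show ?thesis by (simp add: P_def)
qed

lemma P_lb: "- (ln (real CARD('a)) + 2 * real t * ln 2) \<le> P h t x"
proof -
  have l1: "- (real t * ln 2) \<le> ln (w h t x a)" for a
  proof -
    have "ln ((1/2::real)^t) \<le> ln (w h t x a)" using w_lb w_pos by simp
    then show ?thesis by (simp add: ln_realpow ln_div)
  qed
  have "(\<Sum>a\<in>UNIV. \<pi>s x a * (- (real t * ln 2))) \<le> (\<Sum>a\<in>UNIV. \<pi>s x a * ln (w h t x a))"
    by (intro sum_mono mult_left_mono l1 pis_ge0)
  also have "(\<Sum>a\<in>UNIV. \<pi>s x a * (- (real t * ln 2))) = - (real t * ln 2)"
    by (simp only: sum_distrib_right[symmetric] pis_sum)
  finally have A: "- (real t * ln 2) \<le> (\<Sum>a\<in>UNIV. \<pi>s x a * ln (w h t x a))" .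
  have "(\<Sum>a\<in>UNIV. w h t x a) \<le> (\<Sum>a\<in>(UNIV::'a set). (3/2)^t)" by (intro sum_mono w_ub)
  also have "\<dots> \<le> real CARD('a) * 2^t" by (simp add: power_mono)
  finally have "ln (\<Sum>a\<in>UNIV. w h t x a) \<le> ln (real CARD('a) * 2^t)" using W_pos[of h t x] by simp
  also have "\<dots> = ln (real CARD('a)) + real t * ln 2" by (simp add: ln_mult ln_realpow)
  finally show ?thesis using A by (simp add: P_def)
qed

lemma P_abs: "\<bar>P h t x\<bar> \<le> ln (real CARD('a)) + 2 * real t * ln 2"
  using P_lb[of t h x] P_le0[of h t x] by simp

lemma P0: "P h 0 x = - ln (real CARD('a))"
  by (simp add: P_def linprod_weight_def pis_sum)

lemma P_meas[measurable]: "(\<lambda>x. P h t x) \<in> borel_measurable D"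
  unfolding P_def linprod_weight_def by measurable

lemma pt_meas[measurable]: "(\<lambda>x. pt h t x a) \<in> borel_measurable D"
  unfolding linprod_policy_def linprod_weight_def by measurable

end

context setting begin

definition "gg \<theta> x b x' a' = (Vi *v ((\<theta> \<bullet> \<phi> x b) *\<^sub>R \<phi> x b)) \<bullet> \<phi> x' a'"

lemma gg_bound: "\<bar>\<eta> * gg (adv t h) x b x' a'\<bar> \<le> 1/2"
  unfolding gg_def by (rule g_bound[OF conjunct1[OF rew] conjunct2[OF rew]])

lemma th_prefix:
  assumes "k < t"
  shows "theta_hat D \<phi> \<pi>B adv (h(t:=e)) k = theta_hat D \<phi> \<pi>B adv h k"
proof -
  have "restrict (h(t:=e)) {..<k} = restrict h {..<k}" using assms by (auto simp: restrict_def fun_eq_iff)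
  then show ?thesis using assms by (simp add: theta_hat_def)
qed

lemma th_new:
  assumes hinv: "\<forall>k\<ge>t. h k = undefined"
  shows "theta_hat D \<phi> \<pi>B adv (h(t:=(x,a,b))) t = Vi *v ((adv t h \<bullet> \<phi> x b) *\<^sub>R \<phi> x b)"
proof -
  have "restrict (h(t:=(x,a,b))) {..<t} = h" using hinv by (auto simp: restrict_def fun_eq_iff)
  then show ?thesis by (simp add: theta_hat_def)
qed

lemma w_step:
  assumes hinv: "\<forall>k\<ge>t. h k = undefined"
  shows "w (h(t:=(x,a,b))) (Suc t) x' a' = w h t x' a' * (1 + \<eta> * gg (adv t h) x b x' a')"
proof -
  have "(\<Prod>k<t. 1 + \<eta> * (theta_hat D \<phi> \<pi>B adv (h(t:=(x,a,b))) k \<bullet> \<phi> x' a'))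
      = (\<Prod>k<t. 1 + \<eta> * (theta_hat D \<phi> \<pi>B adv h k \<bullet> \<phi> x' a'))"
    by (rule prod.cong) (auto simp: th_prefix)
  then show ?thesis unfolding linprod_weight_def
    by (simp add: th_new[OF hinv] gg_def)
qed

lemma P_step:
  assumes hinv: "\<forall>k\<ge>t. h k = undefined"
  shows "- P (h(t:=(x,a,b))) (Suc t) x' \<le> - P h t x'
     - \<eta> * (\<Sum>a'\<in>UNIV. \<pi>s x' a' * gg (adv t h) x b x' a')
     + \<eta>\<^sup>2 * (\<Sum>a'\<in>UNIV. \<pi>s x' a' * (gg (adv t h) x b x' a')\<^sup>2)
     + \<eta> * (\<Sum>a'\<in>UNIV. pt h t x' a' * gg (adv t h) x b x' a')"
proof -
  define z where "z a' = \<eta> * gg (adv t h) x b x' a'" for a'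
  define W where "W = (\<Sum>a\<in>UNIV. w h t x' a)"
  have Wp: "W > 0" unfolding W_def by (rule W_pos)
  have zb: "-1/2 \<le> z a'" "z a' \<le> 1/2" for a' using gg_bound[of t h x b x' a'] by (auto simp: z_def abs_le_iff)
  have ws: "w (h(t:=(x,a,b))) (Suc t) x' a' = w h t x' a' * (1 + z a')" for a'
    by (simp add: w_step[OF hinv] z_def)
  have lnw: "ln (w (h(t:=(x,a,b))) (Suc t) x' a') = ln (w h t x' a') + ln (1 + z a')" for a'
    unfolding ws using w_pos[of h t x' a'] zb[of a'] by (simp add: ln_mult)
  have A: "(\<Sum>a'\<in>UNIV. \<pi>s x' a' * ln (w (h(t:=(x,a,b))) (Suc t) x' a'))
      \<ge> (\<Sum>a'\<in>UNIV. \<pi>s x' a' * ln (w h t x' a')) + (\<Sum>a'\<in>UNIV. \<pi>s x' a' * (z a' - (z a')\<^sup>2))"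
  proof -
    have "(\<Sum>a'\<in>UNIV. \<pi>s x' a' * (z a' - (z a')\<^sup>2)) \<le> (\<Sum>a'\<in>UNIV. \<pi>s x' a' * ln (1 + z a'))"
      by (intro sum_mono mult_left_mono pis_ge0 ln_lower zb)
    then show ?thesis by (simp add: lnw distrib_left sum.distrib)
  qed
  have sw: "(\<Sum>a'\<in>UNIV. w (h(t:=(x,a,b))) (Suc t) x' a') = W * (1 + (\<Sum>a'\<in>UNIV. pt h t x' a' * z a'))"
    using Wp by (simp add: ws W_def linprod_policy_def distrib_left sum.distrib sum_distrib_left sum_divide_distrib)
  have sp: "0 < 1 + (\<Sum>a'\<in>UNIV. pt h t x' a' * z a')"
    using sw W_pos[of "h(t:=(x,a,b))" "Suc t" x'] Wp by (simp add: zero_less_mult_iff)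
  have B: "ln (\<Sum>a'\<in>UNIV. w (h(t:=(x,a,b))) (Suc t) x' a') \<le> ln W + (\<Sum>a'\<in>UNIV. pt h t x' a' * z a')"
    unfolding sw using Wp sp ln_le_minus_one[OF sp] by (simp add: ln_mult)
  have "- P (h(t:=(x,a,b))) (Suc t) x' \<le> - P h t x' - (\<Sum>a'\<in>UNIV. \<pi>s x' a' * (z a' - (z a')\<^sup>2))
      + (\<Sum>a'\<in>UNIV. pt h t x' a' * z a')"
    using A B unfolding P_def W_def by linarith
  also have "\<dots> = - P h t x'
     - \<eta> * (\<Sum>a'\<in>UNIV. \<pi>s x' a' * gg (adv t h) x b x' a')
     + \<eta>\<^sup>2 * (\<Sum>a'\<in>UNIV. \<pi>s x' a' * (gg (adv t h) x b x' a')\<^sup>2)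
     + \<eta> * (\<Sum>a'\<in>UNIV. pt h t x' a' * gg (adv t h) x b x' a')"
    by (simp add: z_def sum_distrib_left right_diff_distrib sum_subtractf power_mult_distrib mult_ac)
  finally show ?thesis .
qed

end

context setting begin

lemma intD:
  fixes f :: "'x \<Rightarrow> real"
  assumes "f \<in> borel_measurable D" "\<And>x. \<bar>f x\<bar> \<le> B"
  shows "integrable D f"
proof -
  interpret prob_space D by (rule D)
  show ?thesis using assms by (intro integrable_const_bound[where B=B]) auto
qed

lemma phiB: obtains B :: real where "\<And>x a. norm (\<phi> x a) \<le> B" "B \<ge> 0"
  using phi_bdd by (metis norm_ge_zero order_trans)

lemma V_u: "V *v (transpose Vi *v y) = y"
  by (metis matrix_vector_mul_assoc V_tVi matrix_vector_mul_lid)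

lemma gg_alt: "gg \<theta> x b x' a' = (\<theta> \<bullet> \<phi> x b) * (\<phi> x b \<bullet> (transpose Vi *v \<phi> x' a'))"
  by (simp add: gg_def matrix_vector_mult_scaleR dot_transpose)

lemma gg_meas[measurable]: "(\<lambda>x. gg \<theta> x b x' a') \<in> borel_measurable D"
  unfolding gg_def by measurable

lemma I1: "(\<integral>x. (\<Sum>b\<in>UNIV. \<pi>B x b * gg \<theta> x b x' a') \<partial>D) = \<theta> \<bullet> \<phi> x' a'"
proof -
  define u where "u = transpose Vi *v \<phi> x' a'"
  have Vu: "V *v u = \<phi> x' a'" by (simp only: u_def V_u)
  have g: "gg \<theta> x b x' a' = (\<theta> \<bullet> \<phi> x b) * (\<phi> x b \<bullet> u)" for x b by (simp only: gg_alt u_def)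
  have "(\<integral>x. (\<Sum>b\<in>UNIV. \<pi>B x b * gg \<theta> x b x' a') \<partial>D) = \<theta> \<bullet> (V *v u)"
    unfolding V_form g by (simp add: mult_ac)
  then show ?thesis by (simp only: Vu)
qed

lemma quad_nonneg: "0 \<le> y \<bullet> (Vi *v y)"
proof -
  define z where "z = Vi *v y"
  have "V *v z = y" by (simp add: z_def matrix_vector_mul_assoc VVi)
  then have "y \<bullet> (Vi *v y) = z \<bullet> (V *v z)" by (metis z_def inner_commute)
  then show ?thesis using V_psd by simp
qed

lemma I2: "(\<integral>x. (\<Sum>b\<in>UNIV. \<pi>B x b * (gg (adv t h) x b x' a')\<^sup>2) \<partial>D) \<le> \<phi> x' a' \<bullet> (Vi *v \<phi> x' a')"
proof -
  define u where "u = transpose Vi *v \<phi> x' a'"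
  obtain B where B: "\<And>x a. norm (\<phi> x a) \<le> B" "B \<ge> 0" using phiB by blast
  have "(\<integral>x. (\<Sum>b\<in>UNIV. \<pi>B x b * (gg (adv t h) x b x' a')\<^sup>2) \<partial>D)
      \<le> (\<integral>x. (\<Sum>b\<in>UNIV. \<pi>B x b * ((u \<bullet> \<phi> x b) * (\<phi> x b \<bullet> u))) \<partial>D)"
  proof (rule integral_mono)
    show "integrable D (\<lambda>x. \<Sum>b\<in>UNIV. \<pi>B x b * (gg (adv t h) x b x' a')\<^sup>2)"
    proof (rule intD)
      show "(\<lambda>x. \<Sum>b\<in>UNIV. \<pi>B x b * (gg (adv t h) x b x' a')\<^sup>2) \<in> borel_measurable D" by measurable
      fix x
      have "\<bar>\<Sum>b\<in>UNIV. \<pi>B x b * (gg (adv t h) x b x' a')\<^sup>2\<bar> \<le> (\<Sum>b\<in>(UNIV::'a set). 1 * (1/(2*\<eta>))\<^sup>2)"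
      proof (rule order_trans[OF sum_abs sum_mono])
        fix b
        have "\<bar>gg (adv t h) x b x' a'\<bar> \<le> 1/(2*\<eta>)"
          using gg_bound[of t h x b x' a'] eta by (simp add: abs_mult field_simps)
        then have "(gg (adv t h) x b x' a')\<^sup>2 \<le> (1/(2*\<eta>))\<^sup>2"
          by (metis abs_le_square_iff abs_of_nonneg eta less_imp_le divide_nonneg_pos zero_le_one mult_pos_pos zero_less_numeral zero_le_divide_iff)
        then have "\<pi>B x b * (gg (adv t h) x b x' a')\<^sup>2 \<le> 1 * (1/(2*\<eta>))\<^sup>2"
          using piB_ge0[of x b] piB_le1[of x b] by (intro mult_mono) auto
        then show "\<bar>\<pi>B x b * (gg (adv t h) x b x' a')\<^sup>2\<bar> \<le> 1 * (1/(2*\<eta>))\<^sup>2"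
          using piB_ge0[of x b] by simp
      qed
      then show "\<bar>\<Sum>b\<in>UNIV. \<pi>B x b * (gg (adv t h) x b x' a')\<^sup>2\<bar> \<le> real CARD('a) * (1/(2*\<eta>))\<^sup>2" by simp
    qed
    show "integrable D (\<lambda>x. \<Sum>b\<in>UNIV. \<pi>B x b * ((u \<bullet> \<phi> x b) * (\<phi> x b \<bullet> u)))"
    proof (rule intD)
      show "(\<lambda>x. \<Sum>b\<in>UNIV. \<pi>B x b * ((u \<bullet> \<phi> x b) * (\<phi> x b \<bullet> u))) \<in> borel_measurable D" by measurable
      fix x
      have "\<bar>\<Sum>b\<in>UNIV. \<pi>B x b * ((u \<bullet> \<phi> x b) * (\<phi> x b \<bullet> u))\<bar> \<le> (\<Sum>b\<in>(UNIV::'a set). 1 * ((norm u * B) * (B * norm u)))"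
      proof (rule order_trans[OF sum_abs sum_mono])
        fix b
        have a1: "\<bar>u \<bullet> \<phi> x b\<bar> \<le> norm u * B"
          using Cauchy_Schwarz_ineq2[of u "\<phi> x b"] B(1)[of x b] by (meson mult_left_mono norm_ge_zero order_trans)
        have a2: "\<bar>\<phi> x b \<bullet> u\<bar> \<le> B * norm u"
          using a1 by (simp add: inner_commute mult.commute)
        have "\<bar>(u \<bullet> \<phi> x b) * (\<phi> x b \<bullet> u)\<bar> \<le> (norm u * B) * (B * norm u)"
          unfolding abs_mult using B(2) by (intro mult_mono a1 a2) auto
        note p = this
        have "\<bar>\<pi>B x b * ((u \<bullet> \<phi> x b) * (\<phi> x b \<bullet> u))\<bar> = \<pi>B x b * \<bar>(u \<bullet> \<phi> x b) * (\<phi> x b \<bullet> u)\<bar>"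
          using piB_ge0[of x b] by (simp only: abs_mult abs_of_nonneg)
        also have "\<dots> \<le> 1 * ((norm u * B) * (B * norm u))"
          by (rule mult_mono[OF piB_le1 p]) auto
        finally show "\<bar>\<pi>B x b * ((u \<bullet> \<phi> x b) * (\<phi> x b \<bullet> u))\<bar> \<le> 1 * ((norm u * B) * (B * norm u))" .
      qed
      then show "\<bar>\<Sum>b\<in>UNIV. \<pi>B x b * ((u \<bullet> \<phi> x b) * (\<phi> x b \<bullet> u))\<bar> \<le> real CARD('a) * ((norm u * B) * (B * norm u))" by simp
    qed
    fix x
    show "(\<Sum>b\<in>UNIV. \<pi>B x b * (gg (adv t h) x b x' a')\<^sup>2) \<le> (\<Sum>b\<in>UNIV. \<pi>B x b * ((u \<bullet> \<phi> x b) * (\<phi> x b \<bullet> u)))"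
    proof (rule sum_mono)
      fix b
      have c: "0 \<le> adv t h \<bullet> \<phi> x b" "adv t h \<bullet> \<phi> x b \<le> 1" using rew by auto
      have "(gg (adv t h) x b x' a')\<^sup>2 = (adv t h \<bullet> \<phi> x b)\<^sup>2 * (\<phi> x b \<bullet> u)\<^sup>2"
        by (simp add: gg_alt u_def power_mult_distrib)
      also have "\<dots> \<le> 1 * (\<phi> x b \<bullet> u)\<^sup>2"
        using c by (intro mult_right_mono) (auto simp: power_le_one)
      finally show "\<pi>B x b * (gg (adv t h) x b x' a')\<^sup>2 \<le> \<pi>B x b * ((u \<bullet> \<phi> x b) * (\<phi> x b \<bullet> u))"
        by (intro mult_left_mono piB_ge0) (simp add: inner_commute power2_eq_square)
    qed
  qed
  also have "\<dots> = u \<bullet> (V *v u)" by (rule V_form[symmetric])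
  also have "\<dots> = u \<bullet> \<phi> x' a'" by (simp only: u_def V_u)
  also have "\<dots> = \<phi> x' a' \<bullet> (Vi *v \<phi> x' a')"
    unfolding u_def dot_transpose transpose_transpose ..
  finally show ?thesis .
qed

lemma C_form: "C_phi D \<phi> \<pi>s \<pi>B = (\<integral>x. (\<Sum>a\<in>UNIV. \<pi>s x a * (\<phi> x a \<bullet> (Vi *v \<phi> x a))) \<partial>D)"
  unfolding C_phi_def by (rule Vbar_trace[OF D phi_meas phi_bdd pis pis_m])

lemma C_nonneg: "0 \<le> C_phi D \<phi> \<pi>s \<pi>B"
  unfolding C_form by (rule integral_nonneg_AE) (intro AE_I2 sum_nonneg mult_nonneg_nonneg pis_ge0 quad_nonneg)

end

lemma abs_prod_le: "\<bar>p\<bar> \<le> 1 \<Longrightarrow> \<bar>q\<bar> \<le> c \<Longrightarrow> \<bar>p * q\<bar> \<le> (c::real)"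
proof -
  assume a: "\<bar>p\<bar> \<le> 1" "\<bar>q\<bar> \<le> c"
  have "\<bar>p\<bar> * \<bar>q\<bar> \<le> 1 * c" by (rule mult_mono) (use a in auto)
  then show ?thesis by (simp add: abs_mult)
qed

lemma sum_abs_bound:
  fixes f :: "'a::finite \<Rightarrow> real"
  assumes "\<And>a. \<bar>f a\<bar> \<le> c"
  shows "\<bar>\<Sum>a\<in>UNIV. f a\<bar> \<le> real CARD('a) * c"
proof -
  have "\<bar>\<Sum>a\<in>UNIV. f a\<bar> \<le> (\<Sum>a\<in>(UNIV::'a set). c)"
    by (rule order_trans[OF sum_abs sum_mono]) (rule assms)
  then show ?thesis by simp
qed

context setting begin

definition "Rf h t x b x' = - P h t x'
     - \<eta> * (\<Sum>a'\<in>UNIV. \<pi>s x' a' * gg (adv t h) x b x' a')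
     + \<eta>\<^sup>2 * (\<Sum>a'\<in>UNIV. \<pi>s x' a' * (gg (adv t h) x b x' a')\<^sup>2)
     + \<eta> * (\<Sum>a'\<in>UNIV. pt h t x' a' * gg (adv t h) x b x' a')"

lemma gg_meas'[measurable]: "(\<lambda>x'. gg \<theta> x b x' a') \<in> borel_measurable D"
  unfolding gg_def by measurable
lemma gg_meas2[measurable]: "(\<lambda>p. gg \<theta> (fst p) b (snd p) a') \<in> borel_measurable (D \<Otimes>\<^sub>M D)"
  unfolding gg_def by measurable

lemma Rf_meas2: "(\<lambda>p. \<Sum>b\<in>UNIV. \<pi>B (fst p) b * Rf h t (fst p) b (snd p)) \<in> borel_measurable (D \<Otimes>\<^sub>M D)"
  unfolding Rf_def by measurable

lemma Rf_meas1: "(\<lambda>x'. Rf h t x b x') \<in> borel_measurable D"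
  unfolding Rf_def by measurable

lemma Rf_bound: "\<bar>Rf h t x b x'\<bar> \<le> ln (real CARD('a)) + 2 * real t * ln 2 + 2 * real CARD('a)"
proof -
  define g where "g a' = \<eta> * gg (adv t h) x b x' a'" for a'
  have gb: "\<bar>g a'\<bar> \<le> 1/2" for a' unfolding g_def by (rule gg_bound)
  have gb2: "\<bar>(g a')\<^sup>2\<bar> \<le> 1/2" for a'
  proof -
    have "\<bar>g a'\<bar> * \<bar>g a'\<bar> \<le> (1/2) * 1" by (rule mult_mono) (use gb[of a'] in auto)
    then show ?thesis by (simp add: power2_eq_square abs_mult)
  qed
  have p1: "\<bar>\<pi>s x' a'\<bar> \<le> 1" for a' using pis_ge0[of x' a'] pis_le1[of x' a'] by simp
  have p2: "\<bar>pt h t x' a'\<bar> \<le> 1" for a' using pt_ge0[of h t x' a'] pt_le1[of h t x' a'] by simp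
  have t1: "\<bar>\<Sum>a'\<in>UNIV. \<pi>s x' a' * g a'\<bar> \<le> real CARD('a) * (1/2)"
    by (rule sum_abs_bound, rule abs_prod_le[OF p1 gb])
  have t2: "\<bar>\<Sum>a'\<in>UNIV. \<pi>s x' a' * (g a')\<^sup>2\<bar> \<le> real CARD('a) * (1/2)"
    by (rule sum_abs_bound, rule abs_prod_le[OF p1 gb2])
  have t3: "\<bar>\<Sum>a'\<in>UNIV. pt h t x' a' * g a'\<bar> \<le> real CARD('a) * (1/2)"
    by (rule sum_abs_bound, rule abs_prod_le[OF p2 gb])
  have e1: "\<eta> * (\<Sum>a'\<in>UNIV. \<pi>s x' a' * gg (adv t h) x b x' a') = (\<Sum>a'\<in>UNIV. \<pi>s x' a' * g a')"
    unfolding g_def sum_distrib_left by (rule sum.cong) auto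
  have e2: "\<eta>\<^sup>2 * (\<Sum>a'\<in>UNIV. \<pi>s x' a' * (gg (adv t h) x b x' a')\<^sup>2) = (\<Sum>a'\<in>UNIV. \<pi>s x' a' * (g a')\<^sup>2)"
    unfolding g_def sum_distrib_left by (rule sum.cong) (auto simp: power_mult_distrib)
  have e3: "\<eta> * (\<Sum>a'\<in>UNIV. pt h t x' a' * gg (adv t h) x b x' a') = (\<Sum>a'\<in>UNIV. pt h t x' a' * g a')"
    unfolding g_def sum_distrib_left by (rule sum.cong) auto
  show ?thesis unfolding Rf_def e1 e2 e3 using t1 t2 t3 P_abs[of h t x'] by linarith
qed


lemma Q_nonneg: "0 \<le> Q h t"
  unfolding Q_def by (rule integral_nonneg_AE) (simp add: P_le0)

lemma pair: "pair_prob_space D D"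
  unfolding pair_prob_space_def pair_sigma_finite_def using D prob_space_imp_sigma_finite by blast

end

lemma int_bounded:
  fixes f :: "_ \<Rightarrow> real"
  assumes "prob_space M" "f \<in> borel_measurable M" "\<And>x. \<bar>f x\<bar> \<le> B"
  shows "integrable M f"
proof -
  interpret prob_space M by fact
  show ?thesis using assms by (intro integrable_const_bound[where B=B]) auto
qed

lemma int_const: "prob_space M \<Longrightarrow> (\<integral>x. c \<partial>M) = (c::real)"
  by (simp add: prob_space.prob_space)

lemma lin4: "(\<Sum>b\<in>A. p b * (c0 - e * X b + e2 * Y b + e * Z b))
   = c0 * (\<Sum>b\<in>A. p b) - e * (\<Sum>b\<in>A. p b * X b) + e2 * (\<Sum>b\<in>A. p b * Y b) + e * (\<Sum>b\<in>A. p b * Z b)"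
  for p X Y Z :: "_ \<Rightarrow> real"
  by (simp add: algebra_simps sum.distrib sum_subtractf sum_distrib_left)

lemma swap_lemma: "(\<Sum>b\<in>B. p b * (\<Sum>a\<in>A. s a * g b a)) = (\<Sum>a\<in>A. s a * (\<Sum>b\<in>B. p b * (g b a::real)))"
  by (simp add: sum_distrib_left mult_ac) (rule sum.swap)

lemma dsum: "(\<Sum>a\<in>A. \<Sum>b\<in>B. p a * q b * (X + Y b)) = (\<Sum>a\<in>A. p a) * (X * (\<Sum>b\<in>B. q b) + (\<Sum>b\<in>B. q b * (Y b::real)))"
proof -
  have "(\<Sum>a\<in>A. \<Sum>b\<in>B. p a * q b * (X + Y b)) = (\<Sum>a\<in>A. p a * (\<Sum>b\<in>B. q b * (X + Y b)))"
    by (simp add: sum_distrib_left mult.assoc)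
  also have "\<dots> = (\<Sum>a\<in>A. p a) * (\<Sum>b\<in>B. q b * (X + Y b))" by (simp add: sum_distrib_right)
  also have "(\<Sum>b\<in>B. q b * (X + Y b)) = X * (\<Sum>b\<in>B. q b) + (\<Sum>b\<in>B. q b * Y b)"
    by (simp add: distrib_left sum.distrib sum_distrib_left mult.commute)
  finally show ?thesis .
qed

context setting begin

lemma A1_int: "integrable D (\<lambda>x. \<Sum>b\<in>UNIV. \<pi>B x b * gg (adv t h) x b x' a')"
proof (rule int_bounded[OF D])
  show "(\<lambda>x. \<Sum>b\<in>UNIV. \<pi>B x b * gg (adv t h) x b x' a') \<in> borel_measurable D" by measurable
  fix x
  show "\<bar>\<Sum>b\<in>UNIV. \<pi>B x b * gg (adv t h) x b x' a'\<bar> \<le> real CARD('a) * (1/(2*\<eta>))"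
  proof (rule sum_abs_bound, rule abs_prod_le)
    fix b show "\<bar>\<pi>B x b\<bar> \<le> 1" using piB_ge0[of x b] piB_le1[of x b] by simp
    show "\<bar>gg (adv t h) x b x' a'\<bar> \<le> 1/(2*\<eta>)"
      using gg_bound[of t h x b x' a'] eta by (simp add: abs_mult field_simps)
  qed
qed

lemma A2_int: "integrable D (\<lambda>x. \<Sum>b\<in>UNIV. \<pi>B x b * (gg (adv t h) x b x' a')\<^sup>2)"
proof (rule int_bounded[OF D])
  show "(\<lambda>x. \<Sum>b\<in>UNIV. \<pi>B x b * (gg (adv t h) x b x' a')\<^sup>2) \<in> borel_measurable D" by measurable
  fix x
  show "\<bar>\<Sum>b\<in>UNIV. \<pi>B x b * (gg (adv t h) x b x' a')\<^sup>2\<bar> \<le> real CARD('a) * ((1/(2*\<eta>)) * (1/(2*\<eta>)))"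
  proof (rule sum_abs_bound, rule abs_prod_le)
    fix b show "\<bar>\<pi>B x b\<bar> \<le> 1" using piB_ge0[of x b] piB_le1[of x b] by simp
    have g: "\<bar>gg (adv t h) x b x' a'\<bar> \<le> 1/(2*\<eta>)"
      using gg_bound[of t h x b x' a'] eta by (simp add: abs_mult field_simps)
    have "\<bar>gg (adv t h) x b x' a'\<bar> * \<bar>gg (adv t h) x b x' a'\<bar> \<le> (1/(2*\<eta>)) * (1/(2*\<eta>))"
      by (rule mult_mono[OF g g]) (use eta in auto)
    then show "\<bar>(gg (adv t h) x b x' a')\<^sup>2\<bar> \<le> (1/(2*\<eta>)) * (1/(2*\<eta>))"
      by (simp add: power2_eq_square abs_mult)
  qed
qed

lemma inst_int: "integrable D (\<lambda>x. \<Sum>a'\<in>UNIV. (\<pi>s x a' - pt h t x a') * (\<theta> \<bullet> \<phi> x a'))"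
  if "\<And>x a. \<bar>\<theta> \<bullet> \<phi> x a\<bar> \<le> 1"
proof (rule int_bounded[OF D])
  show "(\<lambda>x. \<Sum>a'\<in>UNIV. (\<pi>s x a' - pt h t x a') * (\<theta> \<bullet> \<phi> x a')) \<in> borel_measurable D" by measurable
  fix x
  show "\<bar>\<Sum>a'\<in>UNIV. (\<pi>s x a' - pt h t x a') * (\<theta> \<bullet> \<phi> x a')\<bar> \<le> real CARD('a) * 1"
  proof (rule sum_abs_bound, rule abs_prod_le)
    fix a show "\<bar>\<pi>s x a - pt h t x a\<bar> \<le> 1"
      using pis_ge0[of x a] pis_le1[of x a] pt_ge0[of h t x a] pt_le1[of h t x a] by simp
    show "\<bar>\<theta> \<bullet> \<phi> x a\<bar> \<le> 1" by (rule that)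
  qed
qed

lemma quad_int: "integrable D (\<lambda>x. \<Sum>a\<in>UNIV. \<pi>s x a * (\<phi> x a \<bullet> (Vi *v \<phi> x a)))"
proof -
  obtain B where B: "\<And>x a. norm (\<phi> x a) \<le> B" "B \<ge> 0" using phiB by blast
  show ?thesis
  proof (rule int_bounded[OF D])
    show "(\<lambda>x. \<Sum>a\<in>UNIV. \<pi>s x a * (\<phi> x a \<bullet> (Vi *v \<phi> x a))) \<in> borel_measurable D" by measurable
    fix x
    show "\<bar>\<Sum>a\<in>UNIV. \<pi>s x a * (\<phi> x a \<bullet> (Vi *v \<phi> x a))\<bar> \<le> real CARD('a) * (B * B / lam)"
    proof (rule sum_abs_bound, rule abs_prod_le)
      fix a show "\<bar>\<pi>s x a\<bar> \<le> 1" using pis_ge0[of x a] pis_le1[of x a] by simp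
      have "\<bar>(Vi *v \<phi> x a) \<bullet> \<phi> x a\<bar> \<le> norm (\<phi> x a) * norm (\<phi> x a) / lam" by (rule Vi_bound)
      also have "\<dots> \<le> B * B / lam"
        using lam(1) B by (intro divide_right_mono mult_mono) auto
      finally show "\<bar>\<phi> x a \<bullet> (Vi *v \<phi> x a)\<bar> \<le> B * B / lam" by (simp add: inner_commute)
    qed
  qed
qed

lemma Pint: "integrable D (\<lambda>x. - P h t x)"
  by (rule int_bounded[OF D _ ]) (use P_abs in auto)

lemma Rint: "integrable D (\<lambda>x'. Rf h t x b x')"
  by (rule int_bounded[OF D Rf_meas1 Rf_bound])

end

context setting begin

lemma s5_lemma:
  "(\<integral>x. (\<Sum>b\<in>UNIV. \<pi>B x b * Rf h t x b x') \<partial>D) = - P h t x'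
     - \<eta> * (\<Sum>a'\<in>UNIV. (\<pi>s x' a' - pt h t x' a') * (adv t h \<bullet> \<phi> x' a'))
     + \<eta>\<^sup>2 * (\<Sum>a'\<in>UNIV. \<pi>s x' a' * (\<integral>x. (\<Sum>b\<in>UNIV. \<pi>B x b * (gg (adv t h) x b x' a')\<^sup>2) \<partial>D))"
proof -
  define A1 where "A1 a' x = (\<Sum>b\<in>UNIV. \<pi>B x b * gg (adv t h) x b x' a')" for a' x
  define A2 where "A2 a' x = (\<Sum>b\<in>UNIV. \<pi>B x b * (gg (adv t h) x b x' a')\<^sup>2)" for a' x
  have a1: "integrable D (A1 a')" for a' unfolding A1_def by (rule A1_int)
  have a2: "integrable D (A2 a')" for a' unfolding A2_def by (rule A2_int)
  define S1 where "S1 x = (\<Sum>a'\<in>UNIV. \<pi>s x' a' * A1 a' x)" for x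
  define S2 where "S2 x = (\<Sum>a'\<in>UNIV. \<pi>s x' a' * A2 a' x)" for x
  define S3 where "S3 x = (\<Sum>a'\<in>UNIV. pt h t x' a' * A1 a' x)" for x
  have i1: "integrable D S1" unfolding S1_def by (intro Bochner_Integration.integrable_sum Bochner_Integration.integrable_mult_right a1)
  have i2: "integrable D S2" unfolding S2_def by (intro Bochner_Integration.integrable_sum Bochner_Integration.integrable_mult_right a2)
  have i3: "integrable D S3" unfolding S3_def by (intro Bochner_Integration.integrable_sum Bochner_Integration.integrable_mult_right a1)
  have ic: "integrable D (\<lambda>x. c)" for c :: real by (rule int_bounded[OF D, where B="\<bar>c\<bar>"]) auto
  note ints = Bochner_Integration.integrable_add Bochner_Integration.integrable_diff Bochner_Integration.integrable_mult_right ic i1 i2 i3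
  have fe: "(\<Sum>b\<in>UNIV. \<pi>B x b * Rf h t x b x') = - P h t x' - \<eta> * S1 x + \<eta>\<^sup>2 * S2 x + \<eta> * S3 x" for x
  proof -
    have "(\<Sum>b\<in>UNIV. \<pi>B x b * Rf h t x b x') = (\<Sum>b\<in>UNIV. \<pi>B x b * (- P h t x'
     - \<eta> * (\<Sum>a'\<in>UNIV. \<pi>s x' a' * gg (adv t h) x b x' a')
     + \<eta>\<^sup>2 * (\<Sum>a'\<in>UNIV. \<pi>s x' a' * (gg (adv t h) x b x' a')\<^sup>2)
     + \<eta> * (\<Sum>a'\<in>UNIV. pt h t x' a' * gg (adv t h) x b x' a')))"
      by (simp only: Rf_def)
    also have "\<dots> = - P h t x' * (\<Sum>b\<in>UNIV. \<pi>B x b)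
     - \<eta> * (\<Sum>b\<in>UNIV. \<pi>B x b * (\<Sum>a'\<in>UNIV. \<pi>s x' a' * gg (adv t h) x b x' a'))
     + \<eta>\<^sup>2 * (\<Sum>b\<in>UNIV. \<pi>B x b * (\<Sum>a'\<in>UNIV. \<pi>s x' a' * (gg (adv t h) x b x' a')\<^sup>2))
     + \<eta> * (\<Sum>b\<in>UNIV. \<pi>B x b * (\<Sum>a'\<in>UNIV. pt h t x' a' * gg (adv t h) x b x' a'))"
      by (rule lin4)
    also have "\<dots> = - P h t x' - \<eta> * S1 x + \<eta>\<^sup>2 * S2 x + \<eta> * S3 x"
      unfolding S1_def S2_def S3_def A1_def A2_def piB_sum
      by (simp only: swap_lemma[where p="\<lambda>b. \<pi>B x b"] mult_1_right)
    finally show ?thesis .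
  qed
  have j1: "integral\<^sup>L D S1 = (\<Sum>a'\<in>UNIV. \<pi>s x' a' * integral\<^sup>L D (A1 a'))"
    unfolding S1_def by (subst Bochner_Integration.integral_sum) (auto intro: a1)
  have j2: "integral\<^sup>L D S2 = (\<Sum>a'\<in>UNIV. \<pi>s x' a' * integral\<^sup>L D (A2 a'))"
    unfolding S2_def by (subst Bochner_Integration.integral_sum) (auto intro: a2)
  have j3: "integral\<^sup>L D S3 = (\<Sum>a'\<in>UNIV. pt h t x' a' * integral\<^sup>L D (A1 a'))"
    unfolding S3_def by (subst Bochner_Integration.integral_sum) (auto intro: a1)
  have I1': "integral\<^sup>L D (A1 a') = adv t h \<bullet> \<phi> x' a'" for a' unfolding A1_def by (rule I1)
  have "(\<integral>x. (\<Sum>b\<in>UNIV. \<pi>B x b * Rf h t x b x') \<partial>D)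
      = (\<integral>x. - P h t x' - \<eta> * S1 x + \<eta>\<^sup>2 * S2 x + \<eta> * S3 x \<partial>D)"
    by (simp only: fe)
  also have "\<dots> = (\<integral>x. - P h t x' - \<eta> * S1 x + \<eta>\<^sup>2 * S2 x \<partial>D) + (\<integral>x. \<eta> * S3 x \<partial>D)"
    by (rule Bochner_Integration.integral_add) (intro ints)+
  also have "(\<integral>x. - P h t x' - \<eta> * S1 x + \<eta>\<^sup>2 * S2 x \<partial>D) = (\<integral>x. - P h t x' - \<eta> * S1 x \<partial>D) + (\<integral>x. \<eta>\<^sup>2 * S2 x \<partial>D)"
    by (rule Bochner_Integration.integral_add) (intro ints)+
  also have "(\<integral>x. - P h t x' - \<eta> * S1 x \<partial>D) = (\<integral>x. - P h t x' \<partial>D) - (\<integral>x. \<eta> * S1 x \<partial>D)"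
    by (rule Bochner_Integration.integral_diff) (intro ints)+
  also have "(\<integral>x. - P h t x' \<partial>D) = - P h t x'" by (rule int_const[OF D])
  finally have "(\<integral>x. (\<Sum>b\<in>UNIV. \<pi>B x b * Rf h t x b x') \<partial>D)
     = - P h t x' - \<eta> * integral\<^sup>L D S1 + \<eta>\<^sup>2 * integral\<^sup>L D S2 + \<eta> * integral\<^sup>L D S3"
    by simp
  also have "\<dots> = - P h t x'
     - \<eta> * (\<Sum>a'\<in>UNIV. (\<pi>s x' a' - pt h t x' a') * (adv t h \<bullet> \<phi> x' a'))
     + \<eta>\<^sup>2 * (\<Sum>a'\<in>UNIV. \<pi>s x' a' * integral\<^sup>L D (A2 a'))"
    unfolding j1 j2 j3 I1' by (simp add: algebra_simps sum_subtractf)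
  finally show ?thesis unfolding A2_def .
qed

end

context setting begin

lemma main:
  assumes "\<forall>k\<ge>t. h k = undefined"
  shows "\<eta> * regret_to_go D \<phi> \<pi>B \<pi>s adv \<eta> m t h \<le> Q h t + \<eta>\<^sup>2 * real m * C_phi D \<phi> \<pi>s \<pi>B"
  using assms
proof (induction m arbitrary: t h)
  case 0
  then show ?case using Q_nonneg by simp
next
  case (Suc m)
  note hinv = Suc.prems
  define C where "C = C_phi D \<phi> \<pi>s \<pi>B"
  have C0: "0 \<le> C" using C_nonneg by (simp add: C_def)
  define inst where "inst x = (\<Sum>a'\<in>UNIV. (\<pi>s x a' - pt h t x a') * (adv t h \<bullet> \<phi> x a'))" for x
  define F where "F x = (\<Sum>a\<in>UNIV. \<Sum>b\<in>UNIV. pt h t x a * \<pi>B x b *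
            ((\<Sum>a'\<in>UNIV. (\<pi>s x a' - pt h t x a') * (adv t h \<bullet> \<phi> x a'))
             + regret_to_go D \<phi> \<pi>B \<pi>s adv \<eta> m (Suc t) (h(t := (x, a, b)))))" for x
  have rF: "regret_to_go D \<phi> \<pi>B \<pi>s adv \<eta> (Suc m) t h = integral\<^sup>L D F"
    unfolding F_def[abs_def] by simp
  show ?case
  proof (cases "integrable D F")
    case False
    then have "regret_to_go D \<phi> \<pi>B \<pi>s adv \<eta> (Suc m) t h = 0"
      unfolding rF by (rule not_integrable_integral_eq)
    then show ?thesis using Q_nonneg[of h t] C0 eta by (simp add: C_def[symmetric])
  next
    case True
    interpret pp: pair_prob_space D D by (rule pair)
    define f where "f x x' = (\<Sum>b\<in>UNIV. \<pi>B x b * Rf h t x b x')" for x x'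
    have fint: "integrable (D \<Otimes>\<^sub>M D) (case_prod f)"
    proof (rule int_bounded[OF prob_space_pair[OF D D]])
      show "case_prod f \<in> borel_measurable (D \<Otimes>\<^sub>M D)"
        using Rf_meas2[of h t] by (simp add: f_def case_prod_beta')
      fix p :: "'x \<times> 'x"
      show "\<bar>case_prod f p\<bar> \<le> real CARD('a) * (ln (real CARD('a)) + 2 * real t * ln 2 + 2 * real CARD('a))"
        unfolding f_def case_prod_beta
      proof (rule sum_abs_bound, rule abs_prod_le)
        fix b show "\<bar>\<pi>B (fst p) b\<bar> \<le> 1" using piB_ge0[of "fst p" b] piB_le1[of "fst p" b] by simp
      qed (rule Rf_bound)
    qed
    have s1: "Q (h(t:=(x,a,b))) (Suc t) \<le> (\<integral>x'. Rf h t x b x' \<partial>D)" for x a b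
      unfolding Q_def
    proof (rule integral_mono[OF Pint Rint])
      fix x' show "- P (h(t:=(x,a,b))) (Suc t) x' \<le> Rf h t x b x'"
        using P_step[OF hinv, of x a b x'] by (simp add: Rf_def)
    qed
    have fx: "(\<integral>x'. f x x' \<partial>D) = (\<Sum>b\<in>UNIV. \<pi>B x b * (\<integral>x'. Rf h t x b x' \<partial>D))" for x
    proof -
      have "(\<integral>x'. (\<Sum>b\<in>UNIV. \<pi>B x b * Rf h t x b x') \<partial>D) = (\<Sum>b\<in>UNIV. \<integral>x'. \<pi>B x b * Rf h t x b x' \<partial>D)"
        by (rule Bochner_Integration.integral_sum[where I=UNIV and f="\<lambda>b x'. \<pi>B x b * Rf h t x b x'"]) (intro integrable_mult_right Rint)
      then show ?thesis unfolding f_def by simp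
    qed
    have s2: "\<eta> * F x \<le> \<eta> * inst x + (\<integral>x'. f x x' \<partial>D) + \<eta>\<^sup>2 * real m * C" for x
    proof -
      have IH: "\<eta> * regret_to_go D \<phi> \<pi>B \<pi>s adv \<eta> m (Suc t) (h(t:=(x,a,b)))
          \<le> (\<integral>x'. Rf h t x b x' \<partial>D) + \<eta>\<^sup>2 * real m * C" for a b
      proof -
        have "\<forall>k\<ge>Suc t. (h(t:=(x,a,b))) k = undefined" using hinv by auto
        from Suc.IH[OF this] s1[of x a b] show ?thesis unfolding C_def by linarith
      qed
      have "\<eta> * F x = (\<Sum>a\<in>UNIV. \<Sum>b\<in>UNIV. pt h t x a * \<pi>B x b *
            (\<eta> * inst x + \<eta> * regret_to_go D \<phi> \<pi>B \<pi>s adv \<eta> m (Suc t) (h(t := (x, a, b)))))"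
        by (simp add: F_def inst_def sum_distrib_left algebra_simps)
      also have "\<dots> \<le> (\<Sum>a\<in>UNIV. \<Sum>b\<in>UNIV. pt h t x a * \<pi>B x b *
            (\<eta> * inst x + \<eta>\<^sup>2 * real m * C + (\<integral>x'. Rf h t x b x' \<partial>D)))"
      proof (intro sum_mono mult_left_mono)
        fix a b
        show "\<eta> * inst x + \<eta> * regret_to_go D \<phi> \<pi>B \<pi>s adv \<eta> m (Suc t) (h(t := (x, a, b)))
            \<le> \<eta> * inst x + \<eta>\<^sup>2 * real m * C + (\<integral>x'. Rf h t x b x' \<partial>D)"
          using IH[of a b] by simp
        show "0 \<le> pt h t x a * \<pi>B x b" by (intro mult_nonneg_nonneg pt_ge0 piB_ge0)
      qed
      also have "\<dots> = \<eta> * inst x + \<eta>\<^sup>2 * real m * C + (\<Sum>b\<in>UNIV. \<pi>B x b * (\<integral>x'. Rf h t x b x' \<partial>D))"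
        by (simp only: dsum pt_sum piB_sum) simp
      finally show ?thesis unfolding fx by simp
    qed
    have thb: "\<bar>adv t h \<bullet> \<phi> x a\<bar> \<le> 1" for x a using rew[of t h x a] by simp
    have iint: "integrable D inst" unfolding inst_def by (rule inst_int[OF thb])
    have Gint: "integrable D (\<lambda>x. \<eta> * inst x + (\<integral>x'. f x x' \<partial>D) + \<eta>\<^sup>2 * real m * C)"
      using iint pp.integrable_fst[OF fint] by auto
    have s3: "\<eta> * integral\<^sup>L D F \<le> \<eta> * integral\<^sup>L D inst + (\<integral>x. (\<integral>x'. f x x' \<partial>D) \<partial>D) + \<eta>\<^sup>2 * real m * C"
    proof -
      have "\<eta> * integral\<^sup>L D F = (\<integral>x. \<eta> * F x \<partial>D)" by simp
      also have "\<dots> \<le> (\<integral>x. \<eta> * inst x + (\<integral>x'. f x x' \<partial>D) + \<eta>\<^sup>2 * real m * C \<partial>D)"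
        by (rule integral_mono[OF _ Gint s2]) (use True in auto)
      also have "\<dots> = \<eta> * integral\<^sup>L D inst + (\<integral>x. (\<integral>x'. f x x' \<partial>D) \<partial>D) + \<eta>\<^sup>2 * real m * C"
        using iint pp.integrable_fst[OF fint] by (simp add: pp.M1.prob_space)
      finally show ?thesis .
    qed
    have s4: "(\<integral>x. (\<integral>x'. f x x' \<partial>D) \<partial>D) = (\<integral>x'. (\<integral>x. f x x' \<partial>D) \<partial>D)"
      by (rule pp.Fubini_integral[OF fint, symmetric])
    have s5: "(\<integral>x. f x x' \<partial>D) = - P h t x' - \<eta> * inst x'
        + \<eta>\<^sup>2 * (\<Sum>a'\<in>UNIV. \<pi>s x' a' * (\<integral>x. (\<Sum>b\<in>UNIV. \<pi>B x b * (gg (adv t h) x b x' a')\<^sup>2) \<partial>D))" for x'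
      unfolding f_def inst_def by (rule s5_lemma)
    have s6: "(\<integral>x'. (\<integral>x. f x x' \<partial>D) \<partial>D) \<le> Q h t - \<eta> * integral\<^sup>L D inst + \<eta>\<^sup>2 * C"
    proof -
      have "(\<integral>x'. (\<integral>x. f x x' \<partial>D) \<partial>D) \<le>
          (\<integral>x'. - P h t x' - \<eta> * inst x' + \<eta>\<^sup>2 * (\<Sum>a\<in>UNIV. \<pi>s x' a * (\<phi> x' a \<bullet> (Vi *v \<phi> x' a))) \<partial>D)"
      proof (rule integral_mono)
        show "integrable D (\<lambda>x'. \<integral>x. f x x' \<partial>D)" by (rule pp.integrable_snd[OF fint])
        show "integrable D (\<lambda>x'. - P h t x' - \<eta> * inst x' + \<eta>\<^sup>2 * (\<Sum>a\<in>UNIV. \<pi>s x' a * (\<phi> x' a \<bullet> (Vi *v \<phi> x' a))))"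
          using Pint iint quad_int by auto
        fix x'
        have "(\<Sum>a'\<in>UNIV. \<pi>s x' a' * (\<integral>x. (\<Sum>b\<in>UNIV. \<pi>B x b * (gg (adv t h) x b x' a')\<^sup>2) \<partial>D))
            \<le> (\<Sum>a\<in>UNIV. \<pi>s x' a * (\<phi> x' a \<bullet> (Vi *v \<phi> x' a)))"
          by (intro sum_mono mult_left_mono pis_ge0 I2)
        then show "(\<integral>x. f x x' \<partial>D) \<le> - P h t x' - \<eta> * inst x' + \<eta>\<^sup>2 * (\<Sum>a\<in>UNIV. \<pi>s x' a * (\<phi> x' a \<bullet> (Vi *v \<phi> x' a)))"
          unfolding s5 by (simp add: mult_left_mono)
      qed
      also have "\<dots> = Q h t - \<eta> * integral\<^sup>L D inst + \<eta>\<^sup>2 * C"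
        unfolding Q_def C_def C_form using Pint iint quad_int by simp
      finally show ?thesis .
    qed
    have "\<eta> * regret_to_go D \<phi> \<pi>B \<pi>s adv \<eta> (Suc m) t h \<le> Q h t + \<eta>\<^sup>2 * real m * C + \<eta>\<^sup>2 * C"
      using s3 s4 s6 unfolding rF by linarith
    then show ?thesis by (simp add: C_def algebra_simps)
  qed
qed

end

lemma arith2:
  fixes L N C \<eta> :: real
  assumes e: "\<eta> = sqrt (L / N)" and ep: "\<eta> > 0" and L0: "L \<ge> 0" and N0: "N \<ge> 0"
  shows "L / \<eta> + \<eta> * N * C = sqrt (N * L) * (1 + C)"
proof -
  define p where "p = sqrt L"
  define q where "q = sqrt N"
  have "L / N > 0" using ep e by simp
  then have Np: "N > 0" and Lp: "L > 0" using L0 N0 by (auto simp: zero_less_divide_iff)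
  have pq: "p > 0" "q > 0" "L = p * p" "N = q * q" using Lp Np by (auto simp: p_def q_def)
  have e2: "\<eta> = p / q" unfolding e p_def q_def by (rule real_sqrt_divide)
  have "L / \<eta> = p * q" unfolding e2 pq(3) using pq(1,2) by (simp add: field_simps)
  moreover have "\<eta> * N * C = p * q * C" unfolding e2 pq(4) using pq(1,2) by (simp add: field_simps)
  moreover have "sqrt (N * L) = p * q" by (simp add: p_def q_def real_sqrt_mult mult.commute)
  ultimately show ?thesis by (simp add: algebra_simps)
qed

lemma arith3:
  fixes L N C \<eta> :: real
  assumes e: "\<eta> = sqrt (L / (C * N))" and ep: "\<eta> > 0" and L0: "L \<ge> 0" and N0: "N \<ge> 0" and C0: "C \<ge> 0"
  shows "L / \<eta> + \<eta> * N * C = 2 * sqrt (C * N * L)"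
proof -
  define p where "p = sqrt L"
  define q where "q = sqrt N"
  define c where "c = sqrt C"
  have "L / (C * N) > 0" using ep e by simp
  then have CNp: "C * N > 0" and Lp: "L > 0" using L0 N0 C0 by (auto simp: zero_less_divide_iff)
  then have Np: "N > 0" and Cp: "C > 0" using N0 C0 by (auto simp: zero_less_mult_iff)
  have pq: "p > 0" "q > 0" "c > 0" "L = p * p" "N = q * q" "C = c * c"
    using Lp Np Cp by (auto simp: p_def q_def c_def)
  have e2: "\<eta> = p / (c * q)" unfolding e p_def q_def c_def by (simp add: real_sqrt_divide real_sqrt_mult)
  have "L / \<eta> = p * q * c" unfolding e2 pq(4) using pq(1,2,3) by (simp add: field_simps)
  moreover have "\<eta> * N * C = p * q * c" unfolding e2 pq(5,6) using pq(1,2,3) by (simp add: field_simps)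
  moreover have "sqrt (C * N * L) = p * q * c" by (simp add: p_def q_def c_def real_sqrt_mult mult_ac)
  ultimately show ?thesis by simp
qed

context setting begin

lemma final_bound:
  "regret_to_go D \<phi> \<pi>B \<pi>s adv \<eta> n 0 (\<lambda>_. undefined)
     \<le> ln (real CARD('a)) / \<eta> + \<eta> * real n * C_phi D \<phi> \<pi>s \<pi>B"
proof -
  have "\<eta> * regret_to_go D \<phi> \<pi>B \<pi>s adv \<eta> n 0 (\<lambda>_. undefined)
     \<le> Q (\<lambda>_. undefined) 0 + \<eta>\<^sup>2 * real n * C_phi D \<phi> \<pi>s \<pi>B"
    by (rule main) simp
  also have "Q (\<lambda>_. undefined) 0 = ln (real CARD('a))"
    unfolding Q_def P0 by (simp add: prob_space.prob_space[OF D])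
  finally have A: "\<eta> * regret_to_go D \<phi> \<pi>B \<pi>s adv \<eta> n 0 (\<lambda>_. undefined)
     \<le> ln (real CARD('a)) + \<eta>\<^sup>2 * real n * C_phi D \<phi> \<pi>s \<pi>B" .
  have "\<eta> * (ln (real CARD('a)) / \<eta> + \<eta> * real n * C_phi D \<phi> \<pi>s \<pi>B)
      = ln (real CARD('a)) + \<eta>\<^sup>2 * real n * C_phi D \<phi> \<pi>s \<pi>B"
    using eta by (simp add: distrib_left power2_eq_square)
  with A have "\<eta> * regret_to_go D \<phi> \<pi>B \<pi>s adv \<eta> n 0 (\<lambda>_. undefined)
     \<le> \<eta> * (ln (real CARD('a)) / \<eta> + \<eta> * real n * C_phi D \<phi> \<pi>s \<pi>B)" by simp
  then show ?thesis using eta by (simp add: mult_le_cancel_left_pos)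
qed

end

theorem theorem3:
  fixes D :: "'x measure"
    and U :: "'u measure"
    and \<phi> :: "'x \<Rightarrow> 'a::finite \<Rightarrow> real^'d"
    and \<pi>B \<pi>s :: "'x \<Rightarrow> 'a \<Rightarrow> real"
    and adv :: "'u \<Rightarrow> nat \<Rightarrow> (nat \<Rightarrow> 'x \<times> 'a \<times> 'a) \<Rightarrow> real^'d"
    and n :: nat
  assumes D: "prob_space D"
    and U: "prob_space U"
    and phi_meas: "\<And>a. (\<lambda>x. \<phi> x a) \<in> borel_measurable D"
    and phi_bdd: "\<exists>B. \<forall>x a. norm (\<phi> x a) \<le> B"
    and piB: "is_policy \<pi>B" "\<And>a. (\<lambda>x. \<pi>B x a) \<in> borel_measurable D"
    and pis: "is_policy \<pi>s" "\<And>a. (\<lambda>x. \<pi>s x a) \<in> borel_measurable D"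
    and adv_meas: "\<And>t. (\<lambda>(u, h). adv u t h) \<in> borel_measurable
           (U \<Otimes>\<^sub>M PiM {..<t} (\<lambda>_. D \<Otimes>\<^sub>M (count_space UNIV \<Otimes>\<^sub>M count_space UNIV)))"
    and rewards: "\<And>u t h x a. 0 \<le> adv u t h \<bullet> \<phi> x a \<and> adv u t h \<bullet> \<phi> x a \<le> 1"
    and inv: "invertible (Vbar D \<phi> \<pi>B)"
  shows "(\<forall>\<eta>>0. eta_condition D \<phi> \<pi>B \<eta> \<longrightarrow>
            expected_regret U D \<phi> \<pi>B \<pi>s adv \<eta> n
              \<le> ln (real CARD('a)) / \<eta> + \<eta> * real n * C_phi D \<phi> \<pi>s \<pi>B)
       \<and> (\<forall>\<eta>. \<eta> = sqrt (ln (real CARD('a)) / real n) \<and> \<eta> > 0 \<and> eta_condition D \<phi> \<pi>B \<eta> \<longrightarrow>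
            expected_regret U D \<phi> \<pi>B \<pi>s adv \<eta> n
              \<le> sqrt (real n * ln (real CARD('a))) * (1 + C_phi D \<phi> \<pi>s \<pi>B))
       \<and> (\<forall>\<eta>. \<eta> = sqrt (ln (real CARD('a)) / (C_phi D \<phi> \<pi>s \<pi>B * real n)) \<and> \<eta> > 0
               \<and> eta_condition D \<phi> \<pi>B \<eta> \<longrightarrow>
            expected_regret U D \<phi> \<pi>B \<pi>s adv \<eta> n
              \<le> 2 * sqrt (C_phi D \<phi> \<pi>s \<pi>B * real n * ln (real CARD('a))))"

proof -
  define C where "C = C_phi D \<phi> \<pi>s \<pi>B"
  define L where "L = ln (real CARD('a))"
  have L0: "0 \<le> L" unfolding L_def by simp
  have gen: "expected_regret U D \<phi> \<pi>B \<pi>s adv \<eta> n \<le> L / \<eta> + \<eta> * real n * C"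
    if eta: "\<eta> > 0" and ec: "eta_condition D \<phi> \<pi>B \<eta>" for \<eta>
  proof -
    have st: "setting D \<phi> \<pi>B \<pi>s (adv u) \<eta>" for u
      by (rule setting.intro[OF D phi_meas phi_bdd piB(1) piB(2) pis(1) pis(2) rewards inv eta ec])
    have C0: "0 \<le> C" unfolding C_def by (rule setting.C_nonneg[OF st])
    have b: "regret_to_go D \<phi> \<pi>B \<pi>s (adv u) \<eta> n 0 (\<lambda>_. undefined) \<le> L / \<eta> + \<eta> * real n * C" for u
      unfolding L_def C_def by (rule setting.final_bound[OF st])
    have nn: "0 \<le> L / \<eta> + \<eta> * real n * C" using L0 C0 eta by simp
    show ?thesis
    proof (cases "integrable U (\<lambda>u. regret_to_go D \<phi> \<pi>B \<pi>s (adv u) \<eta> n 0 (\<lambda>_. undefined))")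
      case True
      then show ?thesis unfolding expected_regret_def
        by (rule prob_space.integral_le_const[OF U]) (use b in auto)
    next
      case False
      then show ?thesis unfolding expected_regret_def using nn by (simp add: not_integrable_integral_eq)
    qed
  qed
  have C0: "0 \<le> C" if eta: "\<eta> > 0" and ec: "eta_condition D \<phi> \<pi>B \<eta>" for \<eta>
  proof -
    have st: "setting D \<phi> \<pi>B \<pi>s (adv u) \<eta>" for u
      by (rule setting.intro[OF D phi_meas phi_bdd piB(1) piB(2) pis(1) pis(2) rewards inv eta ec])
    show ?thesis unfolding C_def by (rule setting.C_nonneg[OF st])
  qed
  show ?thesis
  proof (intro conjI allI impI)
    fix \<eta> :: real assume "\<eta> > 0" "eta_condition D \<phi> \<pi>B \<eta>"
    then show "expected_regret U D \<phi> \<pi>B \<pi>s adv \<eta> n \<le> ln (real CARD('a)) / \<eta> + \<eta> * real n * C_phi D \<phi> \<pi>s \<pi>B"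
      using gen unfolding L_def C_def by blast
  next
    fix \<eta> :: real
    assume a: "\<eta> = sqrt (ln (real CARD('a)) / real n) \<and> \<eta> > 0 \<and> eta_condition D \<phi> \<pi>B \<eta>"
    then have g: "expected_regret U D \<phi> \<pi>B \<pi>s adv \<eta> n \<le> L / \<eta> + \<eta> * real n * C" using gen by blast
    have "L / \<eta> + \<eta> * real n * C = sqrt (real n * L) * (1 + C)"
      by (rule arith2) (use a L0 in \<open>auto simp: L_def\<close>)
    then show "expected_regret U D \<phi> \<pi>B \<pi>s adv \<eta> n \<le> sqrt (real n * ln (real CARD('a))) * (1 + C_phi D \<phi> \<pi>s \<pi>B)"
      using g unfolding C_def L_def by simp
  next
    fix \<eta> :: real
    assume a: "\<eta> = sqrt (ln (real CARD('a)) / (C_phi D \<phi> \<pi>s \<pi>B * real n)) \<and> \<eta> > 0 \<and> eta_condition D \<phi> \<pi>B \<eta>"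
    then have g: "expected_regret U D \<phi> \<pi>B \<pi>s adv \<eta> n \<le> L / \<eta> + \<eta> * real n * C" using gen by blast
    have c0: "0 \<le> C" using C0 a by blast
    have "L / \<eta> + \<eta> * real n * C = 2 * sqrt (C * real n * L)"
      by (rule arith3) (use a L0 c0 in \<open>auto simp: L_def C_def\<close>)
    then show "expected_regret U D \<phi> \<pi>B \<pi>s adv \<eta> n \<le> 2 * sqrt (C_phi D \<phi> \<pi>s \<pi>B * real n * ln (real CARD('a)))"
      using g unfolding C_def L_def by simp
  qed
qed

end
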